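(* Assume that $g$ satisfies the Hölderian error bound $\frac{\alpha}{r}\,\mathrm{dist}(\mathbf{x},\mathcal{X}_g^* )^r\leq g(\mathbf{x}) - g^*$ for all $\mathbf{x}\in \mathcal{Z}$, with some $\alpha>0$ and $r\geq 1$, where $\mathrm{dist}(\mathbf{x},\mathcal{X}_g^* )=\inf_{\mathbf{x}'\in\mathcal{X}_g^*}\|\mathbf{x}-\mathbf{x}'\|$, and define $M= \max_{\mathbf{x}\in \mathcal{X}_g^*} \|\nabla f(\mathbf{x})\|_*$. Then for any $\hat{\mathbf{x}}\in\mathcal{Z}$ that satisfies $g(\hat{\mathbf{x}})-g^*\leq \epsilon_g$: (i) If $f$ is convex, then $f(\hat{\mathbf{x}})-f^* \geq -M \left(\frac{r\epsilon_g}{\alpha}\right)^{1/r}$. (ii) If $f$ is non-convex and has $L_f$-Lipschitz gradient, then $\mathcal{G}(\hat{\mathbf{x}}) \geq -M \left(\frac{r\epsilon_g}{\alpha}\right)^{1/r}- L_f\left(\frac{r\epsilon_g}{\alpha}\right)^{2/r}$.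
   Context: Consider the simple bilevel problem $\min_{\mathbf{x}\in\mathbb{R}^d} f(\mathbf{x})$ s.t. $\mathbf{x}\in \operatorname*{arg\,min}_{\mathbf{z}\in\mathcal{Z}} g(\mathbf{z})$, where $\mathcal{Z}\subset\mathbb{R}^d$ is convex and compact, $g$ is convex and continuously differentiable, and $f$ is continuously differentiable. $\|\cdot\|$ is a norm on $\mathbb{R}^d$ with dual norm $\|\cdot\|_*$. Let $g^*=\min_{\mathbf{z}\in\mathcal{Z}}g(\mathbf{z})$, $\mathcal{X}_g^*=\operatorname*{arg\,min}_{\mathbf{z}\in\mathcal{Z}}g(\mathbf{z})$, $f^*$ the optimal value of the bilevel problem, and $\mathcal{G}(\mathbf{x})=\max_{\mathbf{s}\in\mathcal{X}_g^*}\langle\nabla f(\mathbf{x}),\mathbf{x}-\mathbf{s}\rangle$ the Frank–Wolfe gap. *)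

theory Defs
  imports "HOL-Analysis.Analysis"
begin

definition is_norm :: "('a::euclidean_space \<Rightarrow> real) \<Rightarrow> bool" where
  "is_norm N \<longleftrightarrow> (\<forall>x. N x \<ge> 0) \<and> (\<forall>x. N x = 0 \<longleftrightarrow> x = 0)
     \<and> (\<forall>c x. N (c *\<^sub>R x) = \<bar>c\<bar> * N x) \<and> (\<forall>x y. N (x + y) \<le> N x + N y)"

definition dual_norm :: "('a::euclidean_space \<Rightarrow> real) \<Rightarrow> 'a \<Rightarrow> real" where
  "dual_norm N v = Sup {v \<bullet> y | y. N y \<le> 1}"

definition dist_N :: "('a::euclidean_space \<Rightarrow> real) \<Rightarrow> 'a \<Rightarrow> 'a set \<Rightarrow> real" where
  "dist_N N x S = Inf {N (x - y) | y. y \<in> S}"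

definition gstar :: "('a \<Rightarrow> real) \<Rightarrow> 'a set \<Rightarrow> real" where
  "gstar g Z = Inf (g ` Z)"

definition Xgstar :: "('a \<Rightarrow> real) \<Rightarrow> 'a set \<Rightarrow> 'a set" where
  "Xgstar g Z = {z \<in> Z. g z = gstar g Z}"

definition fstar :: "('a \<Rightarrow> real) \<Rightarrow> ('a \<Rightarrow> real) \<Rightarrow> 'a set \<Rightarrow> real" where
  "fstar f g Z = Inf (f ` Xgstar g Z)"

definition FW_gap :: "('a::euclidean_space \<Rightarrow> 'a) \<Rightarrow> ('a \<Rightarrow> real) \<Rightarrow> 'a set \<Rightarrow> 'a \<Rightarrow> real" where
  "FW_gap gradf g Z x = Sup ((\<lambda>s. gradf x \<bullet> (x - s)) ` Xgstar g Z)"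

end

theory Submission
  imports Defs
begin

lemma normN_basic:
  assumes "is_norm N"
  shows "N 0 = 0" "\<And>x. N (-x) = N x" "\<And>x. N x \<ge> 0" "\<And>x y. N (x+y) \<le> N x + N y"
    "\<And>c x. N (c *\<^sub>R x) = \<bar>c\<bar> * N x" "\<And>x. N x = 0 \<longleftrightarrow> x = 0"
proof -
  show "\<And>x. N (-x) = N x" using assms unfolding is_norm_def
    proof -
    fix x have "N ((-1) *\<^sub>R x) = \<bar>-1\<bar> * N x" using assms unfolding is_norm_def by blast
    then show "N (-x) = N x" by simp
  qed
qed (use assms in \<open>auto simp: is_norm_def\<close>)

lemma normN_sum:
  assumes "is_norm N" "finite S"
  shows "N (sum f S) \<le> (\<Sum>i\<in>S. N (f i))"
  using assms(2)
proof (induction S rule: finite_induct)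
  case empty then show ?case using normN_basic(1)[OF assms(1)] by simp
next
  case (insert x F)
  then show ?case using normN_basic(4)[OF assms(1), of "f x" "sum f F"] by simp
qed

lemma normN_upper:
  assumes "is_norm N"
  obtains C where "C > 0" "\<And>x. N x \<le> C * norm x"
proof -
  define C where "C = (\<Sum>b\<in>(Basis::'a set). N b) + 1"
  have "N x \<le> C * norm x" for x :: 'a
  proof -
    have "N x = N (\<Sum>b\<in>Basis. (x \<bullet> b) *\<^sub>R b)" by (simp add: euclidean_representation)
    also have "\<dots> \<le> (\<Sum>b\<in>Basis. N ((x \<bullet> b) *\<^sub>R b))" by (rule normN_sum[OF assms]) simp
    also have "\<dots> = (\<Sum>b\<in>Basis. \<bar>x \<bullet> b\<bar> * N b)" using normN_basic(5)[OF assms] by simp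
    also have "\<dots> \<le> (\<Sum>b\<in>Basis. norm x * N b)"
      by (rule sum_mono, rule mult_right_mono) (auto simp: Basis_le_norm normN_basic(3)[OF assms])
    also have "\<dots> \<le> C * norm x" unfolding C_def
      using norm_ge_zero[of x] by (simp add: sum_distrib_left[symmetric] sum_distrib_right[symmetric] algebra_simps)
    finally show ?thesis .
  qed
  moreover have "C > 0" unfolding C_def using normN_basic(3)[OF assms] by (simp add: sum_nonneg add_nonneg_pos)
  ultimately show ?thesis using that by blast
qed

lemma normN_cont:
  assumes "is_norm N"
  shows "continuous_on UNIV N"
proof -
  obtain C where C: "C > 0" "\<And>x. N x \<le> C * norm x" using normN_upper[OF assms] by blast
  have lip: "\<bar>N x - N y\<bar> \<le> C * norm (x - y)" for x y
  proof -
    have "N x \<le> N y + N (x - y)" using normN_basic(4)[OF assms, of y "x-y"] by simp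
    moreover have "N y \<le> N x + N (y - x)" using normN_basic(4)[OF assms, of x "y-x"] by simp
    moreover have "N (y - x) = N (x - y)" using normN_basic(2)[OF assms, of "x-y"] by simp
    ultimately have "\<bar>N x - N y\<bar> \<le> N (x - y)" by linarith
    then show ?thesis using C(2)[of "x-y"] by linarith
  qed
  show ?thesis unfolding continuous_on_iff
  proof (intro ballI allI impI)
    fix x :: 'a and e :: real assume "e > 0"
    show "\<exists>d>0. \<forall>x'\<in>UNIV. dist x' x < d \<longrightarrow> dist (N x') (N x) < e"
    proof (intro exI[of _ "e / C"] conjI ballI impI)
      show "e / C > 0" using \<open>e>0\<close> C by simp
      fix x' assume "dist x' x < e / C"
      then have "C * norm (x' - x) < e" using C(1) by (simp add: dist_norm field_simps)
      then show "dist (N x') (N x) < e" using lip[of x' x] by (simp add: dist_real_def)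
    qed
  qed
qed

lemma normN_lower:
  assumes "is_norm N"
  obtains c where "c > 0" "\<And>x. c * norm x \<le> N x"
proof -
  have cmp: "compact (sphere (0::'a) 1)" by simp
  obtain b :: 'a where b: "b \<in> Basis" using nonempty_Basis by blast
  have ne: "sphere (0::'a) 1 \<noteq> {}" using b by (auto intro!: exI[of _ b])
  obtain u where u: "u \<in> sphere 0 1" "\<And>y. y \<in> sphere 0 1 \<Longrightarrow> N u \<le> N y"
    using continuous_attains_inf[OF cmp ne continuous_on_subset[OF normN_cont[OF assms]]] by blast
  have "u \<noteq> 0" using u(1) by auto
  then have pos: "N u > 0" using normN_basic(3,6)[OF assms, of u] by auto
  have "N u * norm x \<le> N x" for x
  proof (cases "x = 0")
    case True then show ?thesis using normN_basic(1)[OF assms] by simp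
  next
    case False
    then have "(1 / norm x) *\<^sub>R x \<in> sphere 0 1" by simp
    then have "N u \<le> N ((1 / norm x) *\<^sub>R x)" by (rule u(2))
    also have "\<dots> = N x / norm x" using normN_basic(5)[OF assms] by simp
    finally show ?thesis using False by (simp add: field_simps)
  qed
  then show ?thesis using that pos by blast
qed


lemma dual_props:
  assumes "is_norm N"
  obtains c where "c > 0" "\<And>v. dual_norm N v \<le> norm v / c" "\<And>v. dual_norm N v \<ge> 0"
    "\<And>v y. v \<bullet> y \<le> dual_norm N v * N y"
proof -
  obtain c where c: "c > 0" "\<And>x. c * norm x \<le> N x" using normN_lower[OF assms] by blast
  have bnd: "v \<bullet> y \<le> norm v / c" if "N y \<le> 1" for v y
  proof -
    have "norm y \<le> 1 / c" using c(2)[of y] that c(1) by (simp add: field_simps)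
    then have "norm v * norm y \<le> norm v * (1 / c)" by (intro mult_left_mono) auto
    then show ?thesis using norm_cauchy_schwarz[of v y] by simp
  qed
  have bdd: "bdd_above {v \<bullet> y | y. N y \<le> 1}" for v
    using bnd by (auto intro!: bdd_aboveI[of _ "norm v / c"])
  have mem: "v \<bullet> y \<le> dual_norm N v" if "N y \<le> 1" for v y
    unfolding dual_norm_def by (rule cSup_upper[OF _ bdd]) (use that in auto)
  have up: "dual_norm N v \<le> norm v / c" for v
    unfolding dual_norm_def by (rule cSup_least) (auto intro!: exI[of _ 0] simp: normN_basic(1)[OF assms] bnd)
  have nn: "dual_norm N v \<ge> 0" for v
    using mem[of 0 v] normN_basic(1)[OF assms] by simp
  have ineq: "v \<bullet> y \<le> dual_norm N v * N y" for v y
  proof (cases "y = 0")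
    case True then show ?thesis using normN_basic(1)[OF assms] by simp
  next
    case False
    then have p: "N y > 0" using normN_basic(3,6)[OF assms, of y] by auto
    have "N ((1 / N y) *\<^sub>R y) \<le> 1" using normN_basic(5)[OF assms] p by simp
    then have "v \<bullet> ((1 / N y) *\<^sub>R y) \<le> dual_norm N v" by (rule mem)
    then show ?thesis using p by (simp add: field_simps)
  qed
  show ?thesis using that c(1) up nn ineq by blast
qed

theorem proposition1:
  fixes f g :: "'a::euclidean_space \<Rightarrow> real"
    and gradf gradg :: "'a \<Rightarrow> 'a"
    and Z :: "'a set" and N :: "'a \<Rightarrow> real"
    and \<alpha> r \<epsilon>g :: real and xhat :: 'a
  assumes norm: "is_norm N"
    and Z: "convex Z" "compact Z"
    and g_conv: "convex_on UNIV g"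
    and g_grad: "\<And>x. (g has_derivative (\<lambda>h. gradg x \<bullet> h)) (at x)"
    and g_C1: "continuous_on UNIV gradg"
    and f_grad: "\<And>x. (f has_derivative (\<lambda>h. gradf x \<bullet> h)) (at x)"
    and f_C1: "continuous_on UNIV gradf"
    and \<alpha>: "\<alpha> > 0" and r: "r \<ge> 1"
    and holder: "\<And>x. x \<in> Z \<Longrightarrow>
        (\<alpha> / r) * (dist_N N x (Xgstar g Z)) powr r \<le> g x - gstar g Z"
    and xhat: "xhat \<in> Z" "g xhat - gstar g Z \<le> \<epsilon>g"
  shows "(convex_on UNIV f \<longrightarrow>
            f xhat - fstar f g Z \<ge>
              - (Sup ((\<lambda>x. dual_norm N (gradf x)) ` Xgstar g Z)) * (r * \<epsilon>g / \<alpha>) powr (1 / r))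
       \<and> (\<forall>Lf. (\<forall>x y. dual_norm N (gradf x - gradf y) \<le> Lf * N (x - y)) \<longrightarrow>
            FW_gap gradf g Z xhat \<ge>
              - (Sup ((\<lambda>x. dual_norm N (gradf x)) ` Xgstar g Z)) * (r * \<epsilon>g / \<alpha>) powr (1 / r)
              - Lf * (r * \<epsilon>g / \<alpha>) powr (2 / r))"
proof -
  obtain c where c: "c > 0" "\<And>v. dual_norm N v \<le> norm v / c" "\<And>v. dual_norm N v \<ge> 0"
    "\<And>v y. v \<bullet> y \<le> dual_norm N v * N y" using dual_props[OF norm] by blast
  define X where "X = Xgstar g Z"
  define M where "M = Sup ((\<lambda>x. dual_norm N (gradf x)) ` X)"
  define \<rho> where "\<rho> = r * \<epsilon>g / \<alpha>"
  have gcont: "continuous_on UNIV g"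
    using g_grad has_derivative_continuous continuous_at_imp_continuous_on by blast
  have fcont: "continuous_on UNIV f"
    using f_grad has_derivative_continuous continuous_at_imp_continuous_on by blast
  have Zne: "Z \<noteq> {}" using xhat by auto
  obtain z0 where z0: "z0 \<in> Z" "\<And>y. y \<in> Z \<Longrightarrow> g z0 \<le> g y"
    using continuous_attains_inf[OF Z(2) Zne continuous_on_subset[OF gcont]] by blast
  have gs: "gstar g Z = g z0" unfolding gstar_def
    by (rule cInf_eq_minimum) (use z0 in auto)
  have Xeq: "X = Z \<inter> g -` {g z0}" unfolding X_def Xgstar_def gs by auto
  have Xcomp: "compact X" unfolding Xeq
    by (rule compact_Int_closed[OF Z(2)], rule continuous_closed_vimage)
       (simp_all add: g_grad[THEN has_derivative_continuous])
  have Xne: "z0 \<in> X" unfolding Xeq using z0 by auto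
  have Xsub: "X \<subseteq> Z" unfolding Xeq by auto
  have ncont: "continuous_on X (\<lambda>y. N (xhat - y))"
    by (intro continuous_on_compose2[OF normN_cont[OF norm]] continuous_intros) auto
  obtain xs where xs: "xs \<in> X" "\<And>y. y \<in> X \<Longrightarrow> N (xhat - xs) \<le> N (xhat - y)"
    using continuous_attains_inf[OF Xcomp _ ncont] Xne by blast
  define d where "d = N (xhat - xs)"
  have d0: "d \<ge> 0" unfolding d_def using normN_basic(3)[OF norm] by simp
  have dd: "dist_N N xhat X = d" unfolding dist_N_def d_def
    by (rule cInf_eq_minimum) (use xs in auto)
  have eps0: "\<epsilon>g \<ge> 0" using xhat z0 gs by force
  have rho0: "\<rho> \<ge> 0" unfolding \<rho>_def using eps0 r \<alpha> by simp
  have "(\<alpha> / r) * d powr r \<le> \<epsilon>g" using holder[OF xhat(1)] xhat(2) dd unfolding X_def by simp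
  then have dr: "d powr r \<le> \<rho>" unfolding \<rho>_def using \<alpha> r by (simp add: field_simps)
  have "d = (d powr r) powr (1 / r)" using r d0 by (simp add: powr_powr)
  also have "\<dots> \<le> \<rho> powr (1 / r)" by (rule powr_mono2) (use r dr in auto)
  finally have d1: "d \<le> \<rho> powr (1 / r)" .
  have "d * d \<le> \<rho> powr (1 / r) * \<rho> powr (1 / r)" using d1 d0 by (simp add: mult_mono)
  also have "\<dots> = \<rho> powr (2 / r)" by (simp add: powr_add[symmetric])
  finally have d2: "d * d \<le> \<rho> powr (2 / r)" .
  have "compact (gradf ` X)"
    by (rule compact_continuous_image[OF continuous_on_subset[OF f_C1] Xcomp]) auto
  then obtain B where B: "\<And>x. x \<in> X \<Longrightarrow> norm (gradf x) \<le> B"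
    using compact_imp_bounded bounded_iff by (metis imageI)
  have bddM: "bdd_above ((\<lambda>x. dual_norm N (gradf x)) ` X)"
  proof (rule bdd_aboveI[of _ "B / c"])
    fix y assume "y \<in> (\<lambda>x. dual_norm N (gradf x)) ` X"
    then obtain x where "x \<in> X" "y = dual_norm N (gradf x)" by auto
    then show "y \<le> B / c" using c(2)[of "gradf x"] B[of x] c(1) by (simp add: divide_right_mono order_trans)
  qed
  have Mx: "dual_norm N (gradf xs) \<le> M" unfolding M_def by (rule cSUP_upper[OF xs(1) bddM])
  have M0: "M \<ge> 0" using Mx c(3)[of "gradf xs"] by linarith
  have Md: "M * d \<le> M * \<rho> powr (1 / r)" using M0 d1 by (simp add: mult_left_mono)
  have ineq1: "gradf xs \<bullet> (xhat - xs) \<ge> - (dual_norm N (gradf xs) * d)"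
  proof -
    have "gradf xs \<bullet> (xs - xhat) \<le> dual_norm N (gradf xs) * N (xs - xhat)" by (rule c(4))
    moreover have "N (xs - xhat) = d" unfolding d_def using normN_basic(2)[OF norm, of "xhat - xs"] by simp
    moreover have "gradf xs \<bullet> (xs - xhat) = - (gradf xs \<bullet> (xhat - xs))" by (simp add: inner_diff_right)
    ultimately show ?thesis by auto
  qed
  have ineq1': "gradf xs \<bullet> (xhat - xs) \<ge> - (M * d)"
    using ineq1 Mx d0 by (smt (verit) mult_right_mono)
  have part1: "f xhat - fstar f g Z \<ge> - M * \<rho> powr (1 / r)" if fc: "convex_on UNIV f"
  proof -
    define h where "h = xhat - xs"
    define \<phi> where "\<phi> = (\<lambda>t::real. f (xs + t *\<^sub>R h))"
    have phic: "convex_on UNIV \<phi>"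
    proof (rule convex_onI)
      fix t a b :: real assume t: "t > 0" "t < 1"
      have e: "xs + ((1 - t) * a + t * b) *\<^sub>R h = (1 - t) *\<^sub>R (xs + a *\<^sub>R h) + t *\<^sub>R (xs + b *\<^sub>R h)"
        by (simp add: algebra_simps)
      show "\<phi> ((1 - t) *\<^sub>R a + t *\<^sub>R b) \<le> (1 - t) * \<phi> a + t * \<phi> b"
        unfolding \<phi>_def using convex_onD[OF fc, of t "xs + a *\<^sub>R h" "xs + b *\<^sub>R h"] t e by simp
    qed simp
    have lin: "((\<lambda>t::real. xs + t *\<^sub>R h) has_derivative (\<lambda>t. t *\<^sub>R h)) (at 0)"
      by (auto intro!: derivative_eq_intros)
    have "((f \<circ> (\<lambda>t::real. xs + t *\<^sub>R h)) has_derivative ((\<lambda>k. gradf xs \<bullet> k) \<circ> (\<lambda>t. t *\<^sub>R h))) (at 0)"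
      using diff_chain_at[OF lin, of f] f_grad[of xs] by simp
    moreover have "((\<lambda>k. gradf xs \<bullet> k) \<circ> (\<lambda>t. t *\<^sub>R h)) = (*) (gradf xs \<bullet> h)"
      by (auto simp: fun_eq_iff)
    ultimately have "(\<phi> has_field_derivative (gradf xs \<bullet> h)) (at 0)"
      unfolding has_field_derivative_def \<phi>_def o_def by simp
    then have "\<phi> 1 - \<phi> 0 \<ge> (gradf xs \<bullet> h) * (1 - 0)"
      by (intro convex_on_imp_above_tangent[OF phic]) auto
    then have tan: "f xhat - f xs \<ge> gradf xs \<bullet> (xhat - xs)" unfolding \<phi>_def h_def by simp
    have "compact (f ` X)"
      by (rule compact_continuous_image[OF continuous_on_subset[OF fcont] Xcomp]) auto
    then have "bdd_below (f ` X)" by (simp add: compact_imp_bounded bounded_imp_bdd_below)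
    then have "fstar f g Z \<le> f xs" unfolding fstar_def X_def[symmetric] by (rule cInf_lower[rotated]) (use xs in auto)
    then show ?thesis using tan ineq1' Md by linarith
  qed
  have part2: "FW_gap gradf g Z xhat \<ge> - M * \<rho> powr (1 / r) - Lf * \<rho> powr (2 / r)"
    if L: "\<forall>x y. dual_norm N (gradf x - gradf y) \<le> Lf * N (x - y)" for Lf
  proof -
    obtain b :: 'a where b: "b \<in> Basis" using nonempty_Basis by blast
    have "b \<noteq> 0" using b by auto
    then have Nb: "N b > 0" using normN_basic(3,6)[OF norm, of b] by auto
    have "0 \<le> Lf * N (b - 0)" using L c(3) order_trans by metis
    then have Lf0: "Lf \<ge> 0" using Nb by (simp add: zero_le_mult_iff)
    have "(gradf xhat - gradf xs) \<bullet> (xs - xhat) \<le> dual_norm N (gradf xhat - gradf xs) * N (xs - xhat)" by (rule c(4))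
    moreover have "N (xs - xhat) = d" unfolding d_def using normN_basic(2)[OF norm, of "xhat - xs"] by simp
    moreover have "dual_norm N (gradf xhat - gradf xs) * d \<le> Lf * d * d"
      using L d0 unfolding d_def by (simp add: mult_right_mono)
    moreover have "Lf * (d * d) \<le> Lf * \<rho> powr (2 / r)" using Lf0 d2 by (simp add: mult_left_mono)
    moreover have "gradf xhat \<bullet> (xhat - xs) = gradf xs \<bullet> (xhat - xs) - (gradf xhat - gradf xs) \<bullet> (xs - xhat)"
      by (simp add: inner_diff_left inner_diff_right algebra_simps)
    ultimately have key: "gradf xhat \<bullet> (xhat - xs) \<ge> - M * \<rho> powr (1 / r) - Lf * \<rho> powr (2 / r)"
      using ineq1' Md by (simp add: mult.assoc)
    have cg: "continuous_on X (\<lambda>s. gradf xhat \<bullet> (xhat - s))" by (intro continuous_intros)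
    have "compact ((\<lambda>s. gradf xhat \<bullet> (xhat - s)) ` X)" by (rule compact_continuous_image[OF cg Xcomp])
    then have "bdd_above ((\<lambda>s. gradf xhat \<bullet> (xhat - s)) ` X)" by (simp add: compact_imp_bounded bounded_imp_bdd_above)
    then have "gradf xhat \<bullet> (xhat - xs) \<le> FW_gap gradf g Z xhat"
      unfolding FW_gap_def X_def[symmetric] by (rule cSUP_upper[OF xs(1)])
    then show ?thesis using key by linarith
  qed
  show ?thesis using part1 part2 unfolding M_def \<rho>_def X_def by auto
qed
end
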